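(* Let $C \subset \mathbb{S}^{47}$ be a spherical $11$-design whose set of inner products $I(C)=\{\langle x,y\rangle : x,y\in C,\ x\neq y\}$ satisfies $I(C) \subset [-1,1)\setminus F$, where $F=\left(-\tfrac13,-\tfrac16\right)\cup\left(\tfrac16,\tfrac13\right)$. Then $|C| \geq 52\,416\,000$. If equality holds, then $C$ is distance invariant and its distance distribution is \[ A_{-1}=1,\quad A_{1/2}=A_{-1/2}=36\,848,\quad A_{1/3}=A_{-1/3}=1\,678\,887,\quad A_{1/6}=A_{-1/6}=12\,608\,784,\quad A_0=23\,766\,960 \] (with $A_t=0$ for all other $t$).
   Context: A spherical $\tau$-design is a finite set $C\subset\mathbb{S}^{n-1}$ such that $\int_{\mathbb{S}^{n-1}} p\, d\sigma_n = \frac{1}{|C|}\sum_{x\in C} p(x)$ for every polynomial $p$ in $n$ variables of degree at most $\tau$, where $\sigma_n$ is the normalized surface measure. For $x\in C$ and $t\in[-1,1)$, $A_t(x)=|\{y\in C: \langle x,y\rangle = t\}|$; $C$ is distance invariant if $A_t(x)$ does not depend on $x\in C$ for every $t$, and then one writes $A_t$. *)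

theory Defs
  imports "HOL-Analysis.Analysis"
begin

definition unit_sphere :: "(real ^ 'n) set" where
  "unit_sphere = {x. norm x = 1}"

text \<open>Normalized surface measure on the unit sphere, realised as the cone measure:
  the image of the uniform probability measure on the unit ball under radial projection
  x |-> x / |x|.  This is the rotation invariant probability measure on the sphere.\<close>
definition sphere_measure :: "(real ^ 'n) measure" where
  "sphere_measure = distr (uniform_measure lborel (ball 0 1)) borel (\<lambda>x. x /\<^sub>R norm x)"

definition poly_fun_deg_le :: "nat \<Rightarrow> (real ^ 'n \<Rightarrow> real) \<Rightarrow> bool" where
  "poly_fun_deg_le d p \<longleftrightarrow>
     (\<exists>(M :: ('n \<Rightarrow> nat) set) (c :: ('n \<Rightarrow> nat) \<Rightarrow> real).
        finite M \<and> (\<forall>a\<in>M. (\<Sum>i\<in>UNIV. a i) \<le> d) \<and>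
        (\<forall>x. p x = (\<Sum>a\<in>M. c a * (\<Prod>i\<in>UNIV. (x $ i) ^ a i))))"

definition spherical_design :: "nat \<Rightarrow> (real ^ 'n) set \<Rightarrow> bool" where
  "spherical_design \<tau> C \<longleftrightarrow>
     finite C \<and> C \<noteq> {} \<and> C \<subseteq> unit_sphere \<and>
     (\<forall>p. poly_fun_deg_le \<tau> p \<longrightarrow>
        integral\<^sup>L sphere_measure p = (\<Sum>x\<in>C. p x) / real (card C))"

definition inner_products :: "(real ^ 'n) set \<Rightarrow> real set" where
  "inner_products C = {x \<bullet> y | x y. x \<in> C \<and> y \<in> C \<and> x \<noteq> y}"

definition dist_count :: "(real ^ 'n) set \<Rightarrow> real ^ 'n \<Rightarrow> real \<Rightarrow> nat" where
  "dist_count C x t = card {y \<in> C. x \<bullet> y = t}"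

definition distance_invariant :: "(real ^ 'n) set \<Rightarrow> bool" where
  "distance_invariant C \<longleftrightarrow>
     (\<forall>t. -1 \<le> t \<and> t < 1 \<longrightarrow> (\<forall>x\<in>C. \<forall>y\<in>C. dist_count C x t = dist_count C y t))"

end

theory Submission imports Defs "HOL-Probability.Probability" begin

lemma linear_borel_meas:
  fixes f :: "'a::euclidean_space \<Rightarrow> 'b::euclidean_space"
  assumes "linear f" shows "f \<in> borel_measurable borel"
  by (intro borel_measurable_continuous_onI linear_continuous_on linear_conv_bounded_linear[THEN iffD1] assms)

lemma prod_Basis_cart:
  "(\<Prod>b\<in>(Basis :: (real^'m) set). f b) = (\<Prod>i\<in>UNIV. f (axis i 1))"
proof -
  have "(Basis :: (real^'m) set) = (\<lambda>i. axis i 1) ` UNIV"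
    by (auto simp: Basis_vec_def)
  moreover have "inj (\<lambda>i::'m. axis i (1::real))"
    by (auto simp: inj_def axis_eq_axis)
  ultimately show ?thesis by (metis (no_types, lifting) prod.reindex comp_apply prod.cong)
qed

lemma lborel_perm:
  fixes g :: "'m::finite \<Rightarrow> 'n::finite"
  assumes g: "bij g"
  shows "distr lborel borel (\<lambda>x::real^'n. \<chi> j. x $ g j) = (lborel :: (real^'m) measure)"
proof (rule lborel_eqI[symmetric])
  let ?P = "\<lambda>x::real^'n. \<chi> j. x $ g j"
  let ?Q = "\<lambda>z::real^'m. \<chi> i. z $ inv g i"
  have lin: "linear ?P" by (auto intro!: linearI simp: vec_eq_iff)
  have meas: "?P \<in> borel_measurable borel" by (rule linear_borel_meas[OF lin])
  fix l u :: "real^'m" assume le: "\<And>b. b \<in> Basis \<Longrightarrow> l \<bullet> b \<le> u \<bullet> b"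
  have gi: "g (inv g i) = i" for i using g by (simp add: bij_is_surj surj_f_inv_f)
  have ig: "inv g (g j) = j" for j using g by (simp add: bij_is_inj inv_f_f)
  have pre: "?P -` box l u = box (?Q l) (?Q u)"
  proof -
    have "x \<in> box l u \<longleftrightarrow> (\<forall>j. l $ j < x $ j \<and> x $ j < u $ j)" for x by (simp add: mem_box_cart)
    show ?thesis
      apply (auto simp: mem_box_cart)
      apply (metis gi) apply (metis gi) apply (metis ig) apply (metis ig)
      done
  qed
  have le2: "\<And>b. b \<in> Basis \<Longrightarrow> ?Q l \<bullet> b \<le> ?Q u \<bullet> b"
  proof -
    fix b :: "real^'n" assume "b \<in> Basis"
    then obtain k where b: "b = axis k 1" by (auto simp: Basis_vec_def)
    have "l \<bullet> axis (inv g k) 1 \<le> u \<bullet> axis (inv g k) 1"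
      using le[of "axis (inv g k) 1"] by (simp add: Basis_vec_def, blast)
    then show "?Q l \<bullet> b \<le> ?Q u \<bullet> b" by (simp add: b inner_axis)
  qed
  have "emeasure (distr lborel borel ?P) (box l u) = emeasure lborel (?P -` box l u)"
    using meas by (simp add: emeasure_distr)
  also have "\<dots> = (\<Prod>b\<in>Basis. (?Q u - ?Q l) \<bullet> b)"
    unfolding pre using le2 by (rule emeasure_lborel_box)
  also have "\<dots> = (\<Prod>i\<in>UNIV. (u - l) $ inv g i)"
    by (simp add: prod_Basis_cart cart_eq_inner_axis[symmetric] inner_axis)
  also have "\<dots> = (\<Prod>i\<in>UNIV. (u - l) $ i)"
  proof -
    have r: "range (inv g) = UNIV" using bij_imp_bij_inv[OF g] bij_is_surj by blast
    have i: "inj (inv g)" using bij_imp_bij_inv[OF g] bij_is_inj by blast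
    show ?thesis using prod.reindex[OF i, of "\<lambda>i. (u - l) $ i"] r by (simp add: o_def)
  qed
  also have "\<dots> = (\<Prod>b\<in>Basis. (u - l) \<bullet> b)"
    by (simp add: prod_Basis_cart cart_eq_inner_axis[symmetric] inner_axis)
  finally show "emeasure (distr lborel borel ?P) (box l u) = (\<Prod>b\<in>Basis. (u - l) \<bullet> b)" .
qed simp

lemma emeasure_lborel_lmeas:
  fixes A :: "'a::euclidean_space set"
  assumes "A \<in> sets borel" "A \<in> lmeasurable"
  shows "emeasure lborel A = ennreal (measure lebesgue A)"
proof -
  have "emeasure lebesgue A = emeasure lborel A"
    using assms(1) by (simp add: emeasure_completion)
  moreover have "emeasure lebesgue A = ennreal (measure lebesgue A)"
    using assms(2) by (simp add: emeasure_eq_measure2)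
  ultimately show ?thesis by simp
qed

lemma lborel_orth48:
  fixes Q :: "real^48 \<Rightarrow> real^48"
  assumes Q: "orthogonal_transformation Q"
  shows "distr lborel borel Q = lborel"
proof (rule lborel_eqI[symmetric])
  have lin: "linear Q" using Q by (rule orthogonal_transformation_linear)
  have meas: "Q \<in> borel_measurable borel" by (rule linear_borel_meas[OF lin])
  have T: "orthogonal_transformation (inv Q)" using Q by (rule orthogonal_transformation_inv)
  fix l u :: "real^48" assume le: "\<And>b. b \<in> Basis \<Longrightarrow> l \<bullet> b \<le> u \<bullet> b"
  have pre: "Q -` box l u = inv Q ` box l u"
    using orthogonal_transformation_bij[OF Q] by (simp add: bij_vimage_eq_inv_image)
  have cont: "continuous_on UNIV Q"
    by (intro linear_continuous_on linear_conv_bounded_linear[THEN iffD1] lin)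
  have op: "open (Q -` box l u)"
    using cont by (simp add: continuous_on_open_vimage open_box)
  have "emeasure (distr lborel borel Q) (box l u) = emeasure lborel (Q -` box l u)"
    using meas by (simp add: emeasure_distr)
  also have "\<dots> = ennreal (measure lebesgue (Q -` box l u))"
    by (rule emeasure_lborel_lmeas) (use op pre measurable_orthogonal_image[OF T lmeasurable_box] in auto)
  also have "measure lebesgue (Q -` box l u) = measure lebesgue (box l u)"
    unfolding pre by (rule measure_orthogonal_image[OF T lmeasurable_box])
  also have "ennreal (measure lebesgue (box l u)) = emeasure lborel (box l u)"
    by (rule emeasure_lborel_lmeas[symmetric]) auto
  also have "\<dots> = (\<Prod>b\<in>Basis. (u - l) \<bullet> b)" using le by simp
  finally show "emeasure (distr lborel borel Q) (box l u) = (\<Prod>b\<in>Basis. (u - l) \<bullet> b)" .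
qed simp

lemma perm_orth:
  fixes g :: "'m::finite \<Rightarrow> 'n::finite"
  assumes g: "bij g"
  shows "orthogonal_transformation (\<lambda>x::real^'n. (\<chi> j. x $ g j) :: real^'m)"
  unfolding orthogonal_transformation_def
proof (intro conjI allI)
  show "linear (\<lambda>x::real^'n. (\<chi> j. x $ g j) :: real^'m)" by (auto intro!: linearI simp: vec_eq_iff)
  fix v w :: "real^'n"
  have "(\<chi> j. v $ g j) \<bullet> ((\<chi> j. w $ g j) :: real^'m) = (\<Sum>j\<in>UNIV. v $ g j * w $ g j)"
    by (simp add: inner_vec_def)
  also have "\<dots> = (\<Sum>i\<in>UNIV. v $ i * w $ i)"
    using sum.reindex_bij_betw[OF g, of "\<lambda>i. v $ i * w $ i"] by simp
  also have "\<dots> = v \<bullet> w" by (simp add: inner_vec_def)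
  finally show "(\<chi> j. v $ g j) \<bullet> ((\<chi> j. w $ g j) :: real^'m) = v \<bullet> w" .
qed

lemma lborel_orth:
  fixes Q :: "real^'n::finite \<Rightarrow> real^'n"
  assumes n: "CARD('n) = 48" and Q: "orthogonal_transformation Q"
  shows "distr lborel borel Q = lborel"
proof -
  obtain g :: "48 \<Rightarrow> 'n" where g: "bij g"
  proof -
    have c48: "CARD(48) = 48" by simp
    have "card (UNIV :: 48 set) = card (UNIV :: 'n set)" using n c48 by linarith
    then obtain h where "bij_betw h (UNIV :: 48 set) (UNIV :: 'n set)"
      using finite_same_card_bij[of "UNIV :: 48 set" "UNIV :: 'n set"] by auto
    then show ?thesis using that by blast
  qed
  have ig: "bij (inv g)" using g by (rule bij_imp_bij_inv)
  define \<Phi> where "\<Phi> = (\<lambda>x::real^'n. (\<chi> j. x $ g j) :: real^48)"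
  define \<Psi> where "\<Psi> = (\<lambda>z::real^48. (\<chi> i. z $ inv g i) :: real^'n)"
  have PhiO: "orthogonal_transformation \<Phi>" unfolding \<Phi>_def by (rule perm_orth[OF g])
  have PsiO: "orthogonal_transformation \<Psi>" unfolding \<Psi>_def by (rule perm_orth[OF ig])
  have PsiPhi: "\<Psi> (\<Phi> x) = x" for x
  proof -
    have gi: "g (inv g i) = i" for i using g by (simp add: bij_is_surj surj_f_inv_f)
    show ?thesis by (simp add: \<Phi>_def \<Psi>_def vec_eq_iff gi)
  qed
  have L: "distr lborel borel \<Psi> = (lborel :: (real^'n) measure)"
    unfolding \<Psi>_def by (rule lborel_perm[OF ig])
  define Q' where "Q' = \<Phi> \<circ> Q \<circ> \<Psi>"
  have Q'O: "orthogonal_transformation Q'"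
    unfolding Q'_def by (intro orthogonal_transformation_compose PhiO PsiO Q)
  have mQ: "Q \<in> borel_measurable borel"
    by (rule linear_borel_meas[OF orthogonal_transformation_linear[OF Q]])
  have mPsi: "\<Psi> \<in> borel_measurable borel"
    by (rule linear_borel_meas[OF orthogonal_transformation_linear[OF PsiO]])
  have mQ': "Q' \<in> borel_measurable borel"
    by (rule linear_borel_meas[OF orthogonal_transformation_linear[OF Q'O]])
  have eq: "Q \<circ> \<Psi> = \<Psi> \<circ> Q'" by (rule ext) (simp add: Q'_def PsiPhi)
  have "distr lborel borel Q = distr (distr lborel borel \<Psi>) borel Q" by (simp add: L)
  also have "\<dots> = distr lborel borel (Q \<circ> \<Psi>)"
    using mQ mPsi by (simp add: distr_distr)
  also have "\<dots> = distr lborel borel (\<Psi> \<circ> Q')" by (simp add: eq)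
  also have "\<dots> = distr (distr lborel borel Q') borel \<Psi>"
    using mQ' mPsi by (simp add: distr_distr)
  also have "\<dots> = lborel" using lborel_orth48[OF Q'O] L by simp
  finally show ?thesis .
qed

abbreviation "UB \<equiv> uniform_measure lborel (ball (0::real^'n::finite) 1)"

lemma ball_emeasure_pos: "emeasure lborel (ball (0::real^'n::finite) 1) \<noteq> 0"
proof -
  have p: "unit_ball_vol (real CARD('n)) > 0" by (rule unit_ball_vol_pos) simp
  show ?thesis apply (simp add: emeasure_ball) using p by linarith
qed

lemma U_prob: "prob_space (UB :: (real^'n::finite) measure)"
  by (rule prob_space_uniform_measure) (use ball_emeasure_pos emeasure_lborel_ball_finite[of "0::real^'n" 1] in auto)

lemma proj_meas: "(\<lambda>x::real^'n::finite. x /\<^sub>R norm x) \<in> borel_measurable borel"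
  by measurable

lemma proj_meas_U: "(\<lambda>x::real^'n::finite. x /\<^sub>R norm x) \<in> measurable UB borel"
  using proj_meas by (simp add: measurable_def)

lemma sphere_prob: "prob_space (sphere_measure :: (real^'n::finite) measure)"
  unfolding sphere_measure_def
  by (rule prob_space.prob_space_distr[OF U_prob proj_meas_U])

lemma sets_sphere[simp]: "sets (sphere_measure :: (real^'n::finite) measure) = sets borel"
  by (simp add: sphere_measure_def)

lemma space_sphere[simp]: "space (sphere_measure :: (real^'n::finite) measure) = UNIV"
  by (simp add: sphere_measure_def)

lemma sphere_AE: "AE y in (sphere_measure :: (real^'n::finite) measure). norm y = 1"
  unfolding sphere_measure_def
proof (subst AE_distr_iff[OF proj_meas_U])
  show "{x \<in> space borel. norm (x::real^'n) = 1} \<in> sets borel" by measurable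
  show "AE x in UB. norm (x /\<^sub>R norm x :: real^'n) = 1"
  proof (rule AE_uniform_measureI)
    show "ball 0 1 \<in> sets lborel" by simp
    show "AE x in lborel. x \<in> ball (0::real^'n) 1 \<longrightarrow> norm (x /\<^sub>R norm x) = 1"
      using AE_lborel_singleton[of "0::real^'n"] by eventually_elim simp
  qed
qed

lemma U_invariant:
  fixes Q :: "real^'n::finite \<Rightarrow> real^'n"
  assumes n: "CARD('n) = 48" and Q: "orthogonal_transformation Q"
  shows "distr UB borel Q = UB"
proof (rule measure_eqI)
  have mQ: "Q \<in> borel_measurable borel"
    by (rule linear_borel_meas[OF orthogonal_transformation_linear[OF Q]])
  have mQU: "Q \<in> measurable UB borel" using mQ by (simp add: measurable_def)
  show "sets (distr UB borel Q) = sets UB" by simp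
  fix A assume "A \<in> sets (distr UB borel Q)"
  then have A: "A \<in> sets borel" by simp
  have nQ: "norm (Q x) = norm x" for x using Q by (simp add: orthogonal_transformation_norm)
  have pre: "ball 0 1 \<inter> Q -` A = Q -` (ball 0 1 \<inter> A)" using nQ by auto
  have "emeasure (distr UB borel Q) A = emeasure UB (Q -` A)"
    using mQU A by (simp add: emeasure_distr)
  also have "\<dots> = emeasure lborel (ball 0 1 \<inter> Q -` A) / emeasure lborel (ball (0::real^'n) 1)"
    using A mQ by (subst emeasure_uniform_measure) (auto simp: measurable_sets_borel)
  also have "emeasure lborel (ball 0 1 \<inter> Q -` A) = emeasure (distr lborel borel Q) (ball 0 1 \<inter> A)"
    unfolding pre using mQ A by (simp add: emeasure_distr)
  also have "\<dots> = emeasure lborel (ball 0 1 \<inter> A)" by (simp add: lborel_orth[OF n Q])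
  also have "emeasure lborel (ball 0 1 \<inter> A) / emeasure lborel (ball (0::real^'n) 1) = emeasure UB A"
    using A by (subst emeasure_uniform_measure) auto
  finally show "emeasure (distr UB borel Q) A = emeasure UB A" .
qed

lemma sphere_distr_orth:
  fixes Q :: "real^'n::finite \<Rightarrow> real^'n"
  assumes n: "CARD('n) = 48" and Q: "orthogonal_transformation Q"
  shows "distr sphere_measure borel Q = sphere_measure"
proof -
  have mQ: "Q \<in> borel_measurable borel"
    by (rule linear_borel_meas[OF orthogonal_transformation_linear[OF Q]])
  have mQU: "Q \<in> measurable UB borel" using mQ by (simp add: measurable_def)
  have nQ: "norm (Q x) = norm x" for x using Q by (simp add: orthogonal_transformation_norm)
  have comm: "Q \<circ> (\<lambda>x. x /\<^sub>R norm x) = (\<lambda>x. x /\<^sub>R norm x) \<circ> Q"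
    by (rule ext) (simp add: nQ orthogonal_transformation_scaleR[OF Q])
  have "distr sphere_measure borel Q = distr UB borel (Q \<circ> (\<lambda>x. x /\<^sub>R norm x))"
    unfolding sphere_measure_def using mQ proj_meas_U by (simp add: distr_distr)
  also have "\<dots> = distr UB borel ((\<lambda>x. x /\<^sub>R norm x) \<circ> Q)" by (simp add: comm)
  also have "\<dots> = distr (distr UB borel Q) borel (\<lambda>x. x /\<^sub>R norm x)"
    using mQU proj_meas by (simp add: distr_distr)
  also have "\<dots> = sphere_measure" by (simp add: U_invariant[OF n Q] sphere_measure_def)
  finally show ?thesis .
qed

lemma sphere_integral_orth:
  fixes Q :: "real^'n::finite \<Rightarrow> real^'n" and h :: "real^'n \<Rightarrow> real"
  assumes n: "CARD('n) = 48" and Q: "orthogonal_transformation Q" and h: "h \<in> borel_measurable borel"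
  shows "(\<integral>y. h (Q y) \<partial>sphere_measure) = (\<integral>y. h y \<partial>sphere_measure)"
proof -
  have mQ: "Q \<in> borel_measurable borel"
    by (rule linear_borel_meas[OF orthogonal_transformation_linear[OF Q]])
  have mQS: "Q \<in> measurable sphere_measure borel" using mQ by (simp add: measurable_def)
  have "(\<integral>y. h (Q y) \<partial>sphere_measure) = (\<integral>y. h y \<partial>distr sphere_measure borel Q)"
    using mQS h by (simp add: integral_distr)
  then show ?thesis by (simp add: sphere_distr_orth[OF n Q])
qed

lemma sphere_integrable:
  fixes h :: "real^'n::finite \<Rightarrow> real"
  assumes h: "h \<in> borel_measurable borel" and B: "\<And>y. norm y = 1 \<Longrightarrow> \<bar>h y\<bar> \<le> B"
  shows "integrable sphere_measure h"
proof -
  interpret prob_space "sphere_measure :: (real^'n) measure" by (rule sphere_prob)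
  show ?thesis
  proof (rule integrable_const_bound[where B=B])
    show "AE x in sphere_measure. norm (h x) \<le> B"
      using sphere_AE by eventually_elim (simp add: B)
    show "h \<in> borel_measurable sphere_measure" using h by (simp add: measurable_def)
  qed
qed

lemma inner_pow_bound:
  fixes u y :: "real^'n::finite"
  assumes "norm y = 1"
  shows "\<bar>(u \<bullet> y) ^ k\<bar> \<le> norm u ^ k"
proof -
  have "\<bar>u \<bullet> y\<bar> \<le> norm u" using Cauchy_Schwarz_ineq2[of u y] assms by simp
  then show ?thesis by (simp add: power_abs power_mono)
qed

lemma integrable_inner_pow2:
  fixes u w :: "real^'n::finite"
  shows "integrable sphere_measure (\<lambda>y. (u \<bullet> y) ^ a * (w \<bullet> y) ^ b)"
proof (rule sphere_integrable[where B="norm u ^ a * norm w ^ b"])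
  show "(\<lambda>y. (u \<bullet> y) ^ a * (w \<bullet> y) ^ b) \<in> borel_measurable borel" by measurable
  fix y :: "real^'n" assume "norm y = 1"
  then show "\<bar>(u \<bullet> y) ^ a * (w \<bullet> y) ^ b\<bar> \<le> norm u ^ a * norm w ^ b"
    unfolding abs_mult by (intro mult_mono inner_pow_bound) auto
qed

lemma integrable_inner_pow:
  fixes u :: "real^'n::finite"
  shows "integrable sphere_measure (\<lambda>y. (u \<bullet> y) ^ a)"
  using integrable_inner_pow2[of u a u 0] by simp

definition hh :: "real^'n::finite \<Rightarrow> real^'n \<Rightarrow> real^'n" where
  "hh v y = y - (2 * (v \<bullet> y) / (v \<bullet> v)) *\<^sub>R v"

lemma hh_orth:
  fixes v :: "real^'n::finite"
  assumes v: "v \<noteq> 0"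
  shows "orthogonal_transformation (hh v)"
  unfolding orthogonal_transformation_def
proof (intro conjI allI)
  have hh': "hh v = (\<lambda>y. y - (v \<bullet> y) *\<^sub>R ((2 / (v \<bullet> v)) *\<^sub>R v))"
    by (rule ext) (simp add: hh_def)
  show "linear (hh v)"
    unfolding hh' by (rule linearI) (simp_all add: inner_add_right scaleR_add_left scaleR_right_diff_distrib add_divide_distrib)

  fix a b :: "real^'n"
  have vv: "v \<bullet> v \<noteq> 0" using v by simp
  define \<alpha> where "\<alpha> = 2 * (v \<bullet> a) / (v \<bullet> v)"
  define \<beta> where "\<beta> = 2 * (v \<bullet> b) / (v \<bullet> v)"
  have ha: "hh v a = a - \<alpha> *\<^sub>R v" by (simp add: hh_def \<alpha>_def)
  have hb: "hh v b = b - \<beta> *\<^sub>R v" by (simp add: hh_def \<beta>_def)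
  have key: "\<alpha> * \<beta> * (v \<bullet> v) = \<beta> * (v \<bullet> a) + \<alpha> * (v \<bullet> b)"
    using vv by (simp add: \<alpha>_def \<beta>_def field_simps)
  have ex: "hh v a \<bullet> hh v b = a \<bullet> b - \<beta> * (a \<bullet> v) - \<alpha> * (v \<bullet> b) + \<alpha> * \<beta> * (v \<bullet> v)"
    unfolding ha hb by (simp add: inner_diff_left inner_diff_right algebra_simps)
  show "hh v a \<bullet> hh v b = a \<bullet> b" using ex key by (simp add: inner_commute)
qed

lemma hh_sym:
  fixes v :: "real^'n::finite"
  shows "u \<bullet> hh v y = hh v u \<bullet> y"
  by (simp add: hh_def inner_simps inner_commute)

lemma hh_maps:
  fixes u e :: "real^'n::finite"
  assumes u: "norm u = 1" and e: "norm e = 1" and ne: "u \<noteq> e"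
  shows "hh (u - e) u = e"
proof -
  have uu: "u \<bullet> u = 1" using u by (simp add: dot_square_norm)
  have ee: "e \<bullet> e = 1" using e by (simp add: dot_square_norm)
  have vv: "(u - e) \<bullet> (u - e) = 2 - 2 * (u \<bullet> e)" using uu ee by (simp add: inner_simps inner_commute)
  have nz: "(u - e) \<bullet> (u - e) \<noteq> 0" using ne by simp
  have vu: "(u - e) \<bullet> u = 1 - u \<bullet> e" using uu by (simp add: inner_simps inner_commute)
  have nz': "2 - 2 * (u \<bullet> e) \<noteq> 0" using nz vv by simp
  have c: "2 * ((u - e) \<bullet> u) / ((u - e) \<bullet> (u - e)) = 1"
    unfolding vu vv using nz' by (simp add: field_simps)
  show ?thesis unfolding hh_def c by simp
qed

lemma sphere_unit_inv:
  fixes u e :: "real^'n::finite" and g :: "real \<Rightarrow> real"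
  assumes n: "CARD('n) = 48" and u: "norm u = 1" and e: "norm e = 1"
    and g: "g \<in> borel_measurable borel"
  shows "(\<integral>y. g (u \<bullet> y) \<partial>sphere_measure) = (\<integral>y. g (e \<bullet> y) \<partial>sphere_measure)"
proof (cases "u = e")
  case False
  have v: "u - e \<noteq> 0" using False by simp
  have Q: "orthogonal_transformation (hh (u - e))" by (rule hh_orth[OF v])
  have hm: "(\<lambda>y. g (u \<bullet> y)) \<in> borel_measurable borel" using g by measurable
  have "(\<integral>y. g (u \<bullet> y) \<partial>sphere_measure) = (\<integral>y. g (u \<bullet> hh (u - e) y) \<partial>sphere_measure)"
    using sphere_integral_orth[OF n Q hm] by simp
  also have "\<dots> = (\<integral>y. g (e \<bullet> y) \<partial>sphere_measure)"
    by (simp add: hh_sym hh_maps[OF u e False])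
  finally show ?thesis .
qed simp

lemma sphere_odd:
  fixes u :: "real^'n::finite"
  assumes n: "CARD('n) = 48" and k: "odd k"
  shows "(\<integral>y. (u \<bullet> y) ^ k \<partial>sphere_measure) = 0"
proof -
  have Q: "orthogonal_transformation (\<lambda>y::real^'n. - y)"
    using orthogonal_transformation_neg[of "\<lambda>y. y"] by simp
  have hm: "(\<lambda>y. (u \<bullet> y) ^ k) \<in> borel_measurable borel" by measurable
  have "(\<integral>y. (u \<bullet> y) ^ k \<partial>sphere_measure) = (\<integral>y. (u \<bullet> (- y)) ^ k \<partial>sphere_measure)"
    using sphere_integral_orth[OF n Q hm] by simp
  also have "\<dots> = - (\<integral>y. (u \<bullet> y) ^ k \<partial>sphere_measure)"
    using k by (simp add: power_minus_odd)
  finally show ?thesis by simp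
qed

lemma even_sum_poly:
  fixes c :: "nat \<Rightarrow> real"
  shows "(\<Sum>k\<le>2*j. (if even k then c (k div 2) else 0) * s ^ k) = (\<Sum>i\<le>j. c i * (s^2) ^ i)"
proof (induction j)
  case 0 then show ?case by simp
next
  case (Suc j)
  have e: "2 * Suc j = Suc (Suc (2 * j))" by simp
  show ?case unfolding e sum.atMost_Suc Suc.IH
    by (simp add: power_mult power2_eq_square)
qed

lemma sphere_pencil:
  fixes e f :: "real^'n::finite"
  assumes n: "CARD('n) = 48" and e: "norm e = 1" and f: "norm f = 1" and ef: "e \<bullet> f = 0"
  shows "(\<integral>y. (e \<bullet> y + s * (f \<bullet> y)) ^ (2*j) \<partial>sphere_measure)
       = (1 + s^2) ^ j * (\<integral>y. (e \<bullet> y) ^ (2*j) \<partial>sphere_measure)"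
proof -
  define w where "w = e + s *\<^sub>R f"
  have ee: "e \<bullet> e = 1" using e by (simp add: dot_square_norm)
  have ff: "f \<bullet> f = 1" using f by (simp add: dot_square_norm)
  have fe: "f \<bullet> e = 0" using ef by (simp add: inner_commute)
  have ww: "w \<bullet> w = 1 + s^2"
    using ee ff ef fe by (simp add: w_def inner_add_left inner_add_right power2_eq_square)
  have nw2: "norm w ^ 2 = 1 + s^2" using ww by (simp add: dot_square_norm)
  have nwpos: "norm w > 0" using nw2
    by (metis add_pos_nonneg power2_eq_square zero_less_one zero_le_power2 norm_ge_zero order_le_less mult_zero_left
              less_numeral_extra(3) nat_less_le)
  define u where "u = w /\<^sub>R norm w"
  have u: "norm u = 1" using nwpos by (simp add: u_def)
  have wy: "e \<bullet> y + s * (f \<bullet> y) = norm w * (u \<bullet> y)" for y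
    using nwpos by (simp add: u_def w_def inner_simps)
  have "(\<integral>y. (e \<bullet> y + s * (f \<bullet> y)) ^ (2*j) \<partial>sphere_measure)
      = (\<integral>y. norm w ^ (2*j) * (u \<bullet> y) ^ (2*j) \<partial>sphere_measure)"
    by (simp add: wy power_mult_distrib)
  also have "\<dots> = norm w ^ (2*j) * (\<integral>y. (u \<bullet> y) ^ (2*j) \<partial>sphere_measure)"
    by simp
  also have "(\<integral>y. (u \<bullet> y) ^ (2*j) \<partial>sphere_measure) = (\<integral>y. (e \<bullet> y) ^ (2*j) \<partial>sphere_measure)"
    by (rule sphere_unit_inv[OF n u e]) measurable
  also have "norm w ^ (2*j) = (1 + s^2) ^ j" by (simp add: power_mult nw2)
  finally show ?thesis .
qed

lemma sphere_pencil_expand: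
  fixes e f :: "real^'n::finite"
  shows "(\<integral>y. (e \<bullet> y + s * (f \<bullet> y)) ^ N \<partial>sphere_measure)
       = (\<Sum>k\<le>N. (of_nat (N choose k) * (\<integral>y. (f \<bullet> y) ^ k * (e \<bullet> y) ^ (N - k) \<partial>sphere_measure)) * s ^ k)"
proof -
  have "(\<lambda>y. (e \<bullet> y + s * (f \<bullet> y)) ^ N) = (\<lambda>y. \<Sum>k\<le>N. (of_nat (N choose k) * s ^ k) * ((f \<bullet> y) ^ k * (e \<bullet> y) ^ (N - k)))"
  proof (rule ext)
    fix y
    have "(e \<bullet> y + s * (f \<bullet> y)) ^ N = (s * (f \<bullet> y) + e \<bullet> y) ^ N" by (simp add: add.commute)
    also have "\<dots> = (\<Sum>k\<le>N. of_nat (N choose k) * (s * (f \<bullet> y)) ^ k * (e \<bullet> y) ^ (N - k))"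
      by (rule binomial_ring)
    also have "\<dots> = (\<Sum>k\<le>N. (of_nat (N choose k) * s ^ k) * ((f \<bullet> y) ^ k * (e \<bullet> y) ^ (N - k)))"
      by (rule sum.cong) (simp_all add: power_mult_distrib mult_ac)
    finally show "(e \<bullet> y + s * (f \<bullet> y)) ^ N = (\<Sum>k\<le>N. (of_nat (N choose k) * s ^ k) * ((f \<bullet> y) ^ k * (e \<bullet> y) ^ (N - k)))" .
  qed
  then have "(\<integral>y. (e \<bullet> y + s * (f \<bullet> y)) ^ N \<partial>sphere_measure)
     = (\<Sum>k\<le>N. (\<integral>y. (of_nat (N choose k) * s ^ k) * ((f \<bullet> y) ^ k * (e \<bullet> y) ^ (N - k)) \<partial>sphere_measure))"
    by (simp add: integral_sum integrable_inner_pow2 del: of_nat_sum)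
  also have "\<dots> = (\<Sum>k\<le>N. (of_nat (N choose k) * (\<integral>y. (f \<bullet> y) ^ k * (e \<bullet> y) ^ (N - k) \<partial>sphere_measure)) * s ^ k)"
    by (simp add: mult_ac)
  finally show ?thesis .
qed

lemma sphere_mixed:
  fixes e f :: "real^'n::finite"
  assumes n: "CARD('n) = 48" and e: "norm e = 1" and f: "norm f = 1" and ef: "e \<bullet> f = 0"
    and j: "j \<ge> 1"
  shows "(\<integral>y. (f \<bullet> y) ^ 2 * (e \<bullet> y) ^ (2*j - 2) \<partial>sphere_measure)
       = (\<integral>y. (e \<bullet> y) ^ (2*j) \<partial>sphere_measure) / (2 * real j - 1)"
proof -
  define M where "M = (\<integral>y. (e \<bullet> y) ^ (2*j) \<partial>sphere_measure)"
  define A where "A k = of_nat (2*j choose k) * (\<integral>y. (f \<bullet> y) ^ k * (e \<bullet> y) ^ (2*j - k) \<partial>sphere_measure)" for k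
  define D where "D k = (if even k then of_nat (j choose (k div 2)) * M else 0)" for k
  have "\<forall>s. (\<Sum>k\<le>2*j. A k * s ^ k) = (\<Sum>k\<le>2*j. D k * s ^ k)"
  proof
    fix s :: real
    have "(\<Sum>k\<le>2*j. A k * s ^ k) = (1 + s^2) ^ j * M"
      unfolding A_def M_def using sphere_pencil_expand[of e s f "2*j"] sphere_pencil[OF n e f ef, of s j] by simp
    also have "\<dots> = (\<Sum>i\<le>j. (of_nat (j choose i) * M) * (s^2) ^ i)"
    proof -
      have bin: "(1 + s^2)^j = (\<Sum>i\<le>j. of_nat (j choose i) * (s^2)^i)"
        using binomial_ring[of "s^2" 1 j] by (simp add: add.commute)
      show ?thesis unfolding bin by (simp add: sum_distrib_left sum_distrib_right mult_ac)
    qed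
    also have "\<dots> = (\<Sum>k\<le>2*j. D k * s ^ k)"
      unfolding D_def using even_sum_poly[where j=j and c="\<lambda>i. of_nat (j choose i) * M" and s=s] by (simp add: if_distrib cong: if_cong)
    finally show "(\<Sum>k\<le>2*j. A k * s ^ k) = (\<Sum>k\<le>2*j. D k * s ^ k)" .
  qed
  then have "A 2 = D 2" using j by (subst (asm) polyfun_eq_coeffs) auto
  moreover have "(2*j choose 2) = j * (2*j - 1)" by (simp add: choose_two)
  ultimately have "real j * ((2 * real j - 1) * (\<integral>y. (f \<bullet> y) ^ 2 * (e \<bullet> y) ^ (2*j - 2) \<partial>sphere_measure)) = real j * M"
    using j by (simp add: A_def D_def of_nat_diff mult.assoc)
  then have "(2 * real j - 1) * (\<integral>y. (f \<bullet> y) ^ 2 * (e \<bullet> y) ^ (2*j - 2) \<partial>sphere_measure) = M"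
    using j by simp
  moreover have "2 * real j - 1 > 0" using j by simp
  ultimately show ?thesis unfolding M_def[symmetric] by (simp add: field_simps)
qed

lemma axis_inner: "axis i 1 \<bullet> (y::real^'n::finite) = y $ i"
  by (simp add: inner_commute cart_eq_inner_axis)

lemma sum_sq_axis: "(\<Sum>i\<in>UNIV. (axis i 1 \<bullet> (y::real^'n::finite)) ^ 2) = norm y ^ 2"
  unfolding axis_inner power2_norm_eq_inner by (simp add: inner_vec_def power2_eq_square)

lemma meas_sphere: "(f \<in> borel_measurable (sphere_measure :: (real^'n::finite) measure)) \<longleftrightarrow> f \<in> borel_measurable borel"
  by (simp add: measurable_def)

lemma sphere_rec:
  fixes i0 :: "'n::finite"
  assumes n: "CARD('n) = 48" and j: "j \<ge> 1"
  shows "(\<integral>y. (axis i0 1 \<bullet> y) ^ (2*j-2) \<partial>(sphere_measure :: (real^'n) measure))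
       = (\<integral>y. (axis i0 1 \<bullet> y) ^ (2*j) \<partial>sphere_measure) * (2 * real j + 46) / (2 * real j - 1)"
proof -
  define e :: "real^'n" where "e = axis i0 1"
  define M where "M = (\<integral>y. (e \<bullet> y) ^ (2*j) \<partial>sphere_measure)"
  have ne: "norm e = 1" by (simp add: e_def)
  have "(\<integral>y. (e \<bullet> y) ^ (2*j-2) \<partial>sphere_measure)
      = (\<integral>y. (\<Sum>i\<in>UNIV. (axis i 1 \<bullet> y) ^ 2 * (e \<bullet> y) ^ (2*j-2)) \<partial>sphere_measure)"
  proof (rule integral_cong_AE[where f="\<lambda>y. (e \<bullet> y) ^ (2*j-2)" and g="\<lambda>y. \<Sum>i\<in>UNIV. (axis i 1 \<bullet> y) ^ 2 * (e \<bullet> y) ^ (2*j-2)"])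
    show "AE y in sphere_measure. (e \<bullet> y) ^ (2*j-2) = (\<Sum>i\<in>UNIV. (axis i 1 \<bullet> y) ^ 2 * (e \<bullet> y) ^ (2*j-2))"
      using sphere_AE
    proof eventually_elim
      case (elim y)
      then show ?case by (simp add: sum_distrib_right[symmetric] sum_sq_axis)
    qed
  qed (simp_all add: meas_sphere)
  also have "\<dots> = (\<Sum>i\<in>UNIV. (\<integral>y. (axis i 1 \<bullet> y) ^ 2 * (e \<bullet> y) ^ (2*j-2) \<partial>sphere_measure))"
    by (simp add: integral_sum integrable_inner_pow2)
  also have "\<dots> = (\<integral>y. (axis i0 1 \<bullet> y) ^ 2 * (e \<bullet> y) ^ (2*j-2) \<partial>sphere_measure)
       + (\<Sum>i\<in>UNIV - {i0}. (\<integral>y. (axis i 1 \<bullet> y) ^ 2 * (e \<bullet> y) ^ (2*j-2) \<partial>sphere_measure))"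
    by (simp add: sum.remove)
  also have "(\<integral>y. (axis i0 1 \<bullet> y) ^ 2 * (e \<bullet> y) ^ (2*j-2) \<partial>sphere_measure) = M"
  proof -
    have "2 + (2*j-2) = 2*j" using j by simp
    then have "(\<lambda>y. (axis i0 1 \<bullet> y) ^ 2 * (e \<bullet> y) ^ (2*j-2)) = (\<lambda>y. (e \<bullet> y) ^ (2*j))"
      by (auto simp: e_def power_add[symmetric])
    then show ?thesis by (simp add: M_def)
  qed
  also have "(\<Sum>i\<in>UNIV - {i0}. (\<integral>y. (axis i 1 \<bullet> y) ^ 2 * (e \<bullet> y) ^ (2*j-2) \<partial>sphere_measure))
           = (\<Sum>i\<in>UNIV - {i0}. M / (2 * real j - 1))"
  proof (rule sum.cong)
    fix i assume "i \<in> UNIV - {i0}"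
    then have "i \<noteq> i0" by simp
    then have eq0: "e \<bullet> axis i 1 = 0" by (simp add: e_def inner_axis_axis)
    have nf: "norm (axis i 1 :: real^'n) = 1" by simp
    show "(\<integral>y. (axis i 1 \<bullet> y) ^ 2 * (e \<bullet> y) ^ (2*j-2) \<partial>sphere_measure) = M / (2 * real j - 1)"
      unfolding M_def by (rule sphere_mixed[OF n ne nf eq0 j])
  qed simp
  also have "(\<Sum>i\<in>UNIV - {i0}. M / (2 * real j - 1)) = 47 * M / (2 * real j - 1)"
  proof -
    have "card (UNIV - {i0}) = 47" using n by (simp add: card_Diff_singleton)
    then show ?thesis by simp
  qed
  also have "M + 47 * M / (2 * real j - 1) = M * (2 * real j + 46) / (2 * real j - 1)"
  proof -
    have "2 * real j - 1 > 0" using j by simp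
    then show ?thesis by (simp add: field_simps)
  qed
  finally show ?thesis by (simp add: e_def M_def)
qed

fun momv :: "nat \<Rightarrow> real" where
  "momv 0 = 1"
| "momv (Suc 0) = 0"
| "momv (Suc (Suc k)) = momv k * (real k + 1) / (real k + 48)"

lemma momv_odd: "odd k \<Longrightarrow> momv k = 0"
  by (induction k rule: momv.induct) auto

lemma sphere_moment_axis:
  fixes i0 :: "'n::finite"
  assumes n: "CARD('n) = 48"
  shows "(\<integral>y. (axis i0 1 \<bullet> y) ^ k \<partial>(sphere_measure :: (real^'n) measure)) = momv k"
proof (induction k rule: momv.induct)
  case 1
  interpret prob_space "sphere_measure :: (real^'n) measure" by (rule sphere_prob)
  show ?case using prob_space by simp
next
  case 2
  show ?case using sphere_odd[OF n, of 1] by simp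
next
  case (3 k)
  show ?case
  proof (cases "even k")
    case False
    then show ?thesis using sphere_odd[OF n, of "Suc (Suc k)"] momv_odd[of "Suc (Suc k)"] by simp
  next
    case True
    then obtain m where k: "k = 2 * m" by blast
    have r: "(\<integral>y. (axis i0 1 \<bullet> y) ^ (2*(m+1)-2) \<partial>(sphere_measure :: (real^'n) measure))
       = (\<integral>y. (axis i0 1 \<bullet> y) ^ (2*(m+1)) \<partial>sphere_measure) * (2 * real (m+1) + 46) / (2 * real (m+1) - 1)"
      by (rule sphere_rec[OF n]) simp
    have e1: "2*(m+1)-2 = k" "2*(m+1) = Suc (Suc k)" using k by auto
    have e2: "2 * real (m+1) + 46 = real k + 48" "2 * real (m+1) - 1 = real k + 1" using k by auto
    have "momv k = (\<integral>y. (axis i0 1 \<bullet> y) ^ (Suc (Suc k)) \<partial>(sphere_measure :: (real^'n) measure)) * (real k + 48) / (real k + 1)"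
      using r unfolding e1(1) unfolding e1(2) e2 3 .
    then show ?thesis by (simp add: field_simps)
  qed
qed

lemma sphere_moment:
  fixes u :: "real^'n::finite"
  assumes n: "CARD('n) = 48" and u: "norm u = 1"
  shows "(\<integral>y. (u \<bullet> y) ^ k \<partial>sphere_measure) = momv k"
proof -
  have "(\<integral>y. (u \<bullet> y) ^ k \<partial>sphere_measure) = (\<integral>y. (axis (undefined::'n) 1 \<bullet> y) ^ k \<partial>(sphere_measure :: (real^'n) measure))"
  proof -
    have na: "norm (axis (undefined::'n) 1 :: real^'n) = 1" by simp
    have g: "(\<lambda>t::real. t^k) \<in> borel_measurable borel" by measurable
    show ?thesis using sphere_unit_inv[OF n u na g] by simp
  qed
  then show ?thesis using sphere_moment_axis[OF n] by simp
qed

definition mon :: "('n::finite \<Rightarrow> nat) \<Rightarrow> real^'n \<Rightarrow> real" where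
  "mon a x = (\<Prod>i\<in>UNIV. (x $ i) ^ a i)"

lemma pf_def': "poly_fun_deg_le d p \<longleftrightarrow>
     (\<exists>(M :: ('n::finite \<Rightarrow> nat) set) c. finite M \<and> (\<forall>a\<in>M. (\<Sum>i\<in>UNIV. a i) \<le> d) \<and>
        (\<forall>x. p x = (\<Sum>a\<in>M. c a * mon a x)))"
  unfolding poly_fun_deg_le_def mon_def by simp

lemma pf_mono: "poly_fun_deg_le d p \<Longrightarrow> d \<le> d' \<Longrightarrow> poly_fun_deg_le d' p"
  unfolding poly_fun_deg_le_def by (blast intro: order_trans)

lemma pf_const: "poly_fun_deg_le d (\<lambda>_::real^'n::finite. c)"
  unfolding pf_def' by (rule exI[of _ "{\<lambda>_. 0}"], rule exI[of _ "\<lambda>_. c"]) (simp add: mon_def)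

lemma pf_add:
  fixes p q :: "real^'n::finite \<Rightarrow> real"
  assumes "poly_fun_deg_le d p" "poly_fun_deg_le d q"
  shows "poly_fun_deg_le d (\<lambda>x. p x + q x)"
proof -
  obtain M c where M: "finite M" "\<forall>a\<in>M. (\<Sum>i\<in>UNIV. a i) \<le> d" "\<forall>x. p x = (\<Sum>a\<in>M. c a * mon a x)"
    using assms(1) unfolding pf_def' by blast
  obtain N e where N: "finite N" "\<forall>a\<in>N. (\<Sum>i\<in>UNIV. a i) \<le> d" "\<forall>x. q x = (\<Sum>a\<in>N. e a * mon a x)"
    using assms(2) unfolding pf_def' by blast
  define c' where "c' a = (if a \<in> M then c a else 0) + (if a \<in> N then e a else 0)" for a
  have IM: "(M \<union> N) \<inter> {a. a \<in> M} = M" and IN: "(M \<union> N) \<inter> {a. a \<in> N} = N" by auto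
  have "p x + q x = (\<Sum>a\<in>M \<union> N. c' a * mon a x)" for x
  proof -
    have "(\<Sum>a\<in>M \<union> N. c' a * mon a x) = (\<Sum>a\<in>M \<union> N. (if a \<in> M then c a * mon a x else 0)) + (\<Sum>a\<in>M \<union> N. (if a \<in> N then e a * mon a x else 0))"
      unfolding sum.distrib[symmetric] by (rule sum.cong) (simp_all add: c'_def distrib_right)
    also have "(\<Sum>a\<in>M \<union> N. (if a \<in> M then c a * mon a x else 0)) = (\<Sum>a\<in>M. c a * mon a x)"
      using M(1) N(1) by (simp add: sum.If_cases IM IN)
    also have "(\<Sum>a\<in>M \<union> N. (if a \<in> N then e a * mon a x else 0)) = (\<Sum>a\<in>N. e a * mon a x)"
      using M(1) N(1) by (simp add: sum.If_cases IM IN)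
    finally show ?thesis using M(3) N(3) by simp
  qed
  then show ?thesis unfolding pf_def' using M N by (intro exI[of _ "M \<union> N"] exI[of _ c']) auto
qed

lemma mon_add: "mon a x * mon b x = mon (\<lambda>i. a i + b i) x"
  by (simp add: mon_def prod.distrib[symmetric] power_add)

lemma pf_mult:
  fixes p q :: "real^'n::finite \<Rightarrow> real"
  assumes "poly_fun_deg_le d1 p" "poly_fun_deg_le d2 q"
  shows "poly_fun_deg_le (d1 + d2) (\<lambda>x. p x * q x)"
proof -
  obtain M c where M: "finite M" "\<forall>a\<in>M. (\<Sum>i\<in>UNIV. a i) \<le> d1" "\<forall>x. p x = (\<Sum>a\<in>M. c a * mon a x)"
    using assms(1) unfolding pf_def' by blast
  obtain N e where N: "finite N" "\<forall>a\<in>N. (\<Sum>i\<in>UNIV. a i) \<le> d2" "\<forall>x. q x = (\<Sum>a\<in>N. e a * mon a x)"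
    using assms(2) unfolding pf_def' by blast
  define h :: "('n \<Rightarrow> nat) \<times> ('n \<Rightarrow> nat) \<Rightarrow> ('n \<Rightarrow> nat)" where "h = (\<lambda>(a, b). (\<lambda>i. a i + b i))"
  define K where "K = h ` (M \<times> N)"
  define c' where "c' m = (\<Sum>ab\<in>{ab. ab \<in> M \<times> N \<and> h ab = m}. c (fst ab) * e (snd ab))" for m
  have fin: "finite (M \<times> N)" using M(1) N(1) by simp
  have "p x * q x = (\<Sum>m\<in>K. c' m * mon m x)" for x
  proof -
    have "p x * q x = (\<Sum>a\<in>M. \<Sum>b\<in>N. c a * e b * mon (h (a, b)) x)"
      using M(3) N(3) by (simp add: sum_product h_def mon_add[symmetric] mult_ac)
    also have "\<dots> = (\<Sum>ab\<in>M \<times> N. c (fst ab) * e (snd ab) * mon (h ab) x)"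
      by (simp add: sum.cartesian_product case_prod_beta)
    also have "\<dots> = (\<Sum>m\<in>K. \<Sum>ab\<in>{ab. ab \<in> M \<times> N \<and> h ab = m}. c (fst ab) * e (snd ab) * mon (h ab) x)"
      unfolding K_def by (rule sum.image_gen[OF fin])
    also have "\<dots> = (\<Sum>m\<in>K. c' m * mon m x)"
      unfolding c'_def by (rule sum.cong) (auto simp: sum_distrib_right intro!: sum.cong)
    finally show ?thesis .
  qed
  moreover have "finite K" unfolding K_def using fin by simp
  moreover have "\<forall>m\<in>K. (\<Sum>i\<in>UNIV. m i) \<le> d1 + d2"
    using M(2) N(2) by (auto simp: K_def h_def sum.distrib intro: add_mono)
  ultimately show ?thesis unfolding pf_def' by blast
qed

lemma pf_inner: "poly_fun_deg_le 1 (\<lambda>y::real^'n::finite. u \<bullet> y)"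
proof -
  define ui where "ui j = (\<lambda>i. if i = j then 1 else 0 :: nat)" for j :: 'n
  have inj: "inj ui" unfolding ui_def inj_def by (metis zero_neq_one)
  define c where "c a = u $ (THE j. ui j = a)" for a
  have monui: "mon (ui j) y = y $ j" for j y
  proof -
    have "mon (ui j) y = (\<Prod>i\<in>UNIV. if i = j then y $ i else 1)"
      unfolding mon_def ui_def by (rule prod.cong) auto
    then show ?thesis by simp
  qed
  have cui: "c (ui j) = u $ j" for j unfolding c_def using inj by (simp add: inj_eq)
  have "u \<bullet> y = (\<Sum>a\<in>range ui. c a * mon a y)" for y
    by (simp add: sum.reindex[OF inj] cui monui inner_vec_def)
  moreover have "\<forall>a\<in>range ui. (\<Sum>i\<in>UNIV. a i) \<le> 1"
    by (auto simp: ui_def)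
  ultimately show ?thesis unfolding pf_def' by (intro exI[of _ "range ui"] exI[of _ c]) auto
qed

lemma pf_pow: "poly_fun_deg_le k (\<lambda>y::real^'n::finite. (u \<bullet> y) ^ k)"
proof (induction k)
  case 0 then show ?case using pf_const[of 0 1] by simp
next
  case (Suc k)
  from pf_mult[OF pf_inner Suc] show ?case by simp
qed

lemma pf_sum:
  fixes f :: "'i \<Rightarrow> real^'n::finite \<Rightarrow> real"
  assumes "finite I" "\<And>i. i \<in> I \<Longrightarrow> poly_fun_deg_le d (f i)"
  shows "poly_fun_deg_le d (\<lambda>y. \<Sum>i\<in>I. f i y)"
  using assms
proof (induction I rule: finite_induct)
  case empty then show ?case using pf_const[of d 0] by simp
next
  case (insert x F)
  then show ?case using pf_add[of d "f x" "\<lambda>y. \<Sum>i\<in>F. f i y"] by simp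
qed

lemma pf_cmult: "poly_fun_deg_le d p \<Longrightarrow> poly_fun_deg_le d (\<lambda>y. c * p y)"
  using pf_mult[OF pf_const[of 0 c]] by simp

lemma pf_inner_poly:
  fixes u :: "real^'n::finite"
  assumes "length cs \<le> Suc d"
  shows "poly_fun_deg_le d (\<lambda>y. \<Sum>k<length cs. cs ! k * (u \<bullet> y) ^ k)"
proof (rule pf_sum)
  fix k assume "k \<in> {..<length cs}"
  then have "k \<le> d" using assms by simp
  then show "poly_fun_deg_le d (\<lambda>y. cs ! k * (u \<bullet> y) ^ k)"
    by (intro pf_cmult pf_mono[OF pf_pow])
qed simp

fun plh :: "real list \<Rightarrow> real \<Rightarrow> real" where
  "plh [] t = 0"
| "plh (c # cs) t = c + t * plh cs t"

fun pm :: "real list \<Rightarrow> nat \<Rightarrow> real" where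
  "pm [] k = 0"
| "pm (c # cs) k = c * momv k + pm cs (Suc k)"

lemma plh_sum: "plh cs t = (\<Sum>k<length cs. cs ! k * t ^ k)"
proof (induction cs)
  case Nil then show ?case by simp
next
  case (Cons c cs)
  have "(\<Sum>k<length (c # cs). (c # cs) ! k * t ^ k) = c + (\<Sum>k<length cs. cs ! k * t ^ Suc k)"
    by (simp add: sum.lessThan_Suc_shift del: sum.lessThan_Suc)
  also have "\<dots> = c + t * plh cs t" by (simp add: Cons.IH sum_distrib_left mult_ac)
  finally show ?case by simp
qed

lemma pm_sum: "pm cs k0 = (\<Sum>k<length cs. cs ! k * momv (k + k0))"
proof (induction cs arbitrary: k0)
  case Nil then show ?case by simp
next
  case (Cons c cs)
  show ?case
    by (simp add: sum.lessThan_Suc_shift Cons.IH del: sum.lessThan_Suc)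
qed

definition fcs :: "real list" where
  "fcs = [0, 0, 1/5184, 1/5184, -53/5184, -53/5184, 175/1296, 175/1296, -23/36, -23/36, 1, 1]"

lemma fcs_prod: "plh fcs t = (t+1)*t*t*((t-1/2)*(t-1/2)*(t+1/2)*(t+1/2))*((t-1/3)*(t+1/3)*(t-1/6)*(t+1/6))"
  unfolding fcs_def by simp algebra

lemma fcs_vals: "plh fcs 1 = 35/36" "pm fcs 0 = 1/53913600"
  by (simp_all add: fcs_def eval_nat_numeral)

lemma L1: "plh [0, 1/840, 0, -7/120, 0, 3/5, 0, -54/35] (-1) = 1"
  "plh [0, 1/840, 0, -7/120, 0, 3/5, 0, -54/35] (1/2) = 0"
  "52416000 * pm [0, 1/840, 0, -7/120, 0, 3/5, 0, -54/35] 0 - plh [0, 1/840, 0, -7/120, 0, 3/5, 0, -54/35] 1 = 1"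
  by (simp_all add: eval_nat_numeral)

lemma design_sum:
  fixes C :: "(real^'n::finite) set"
  assumes n: "CARD('n) = 48" and des: "spherical_design 11 C" and x: "x \<in> C" and len: "length cs \<le> 12"
  shows "(\<Sum>y\<in>C. plh cs (x \<bullet> y)) = real (card C) * pm cs 0"
proof -
  have fin: "finite C" and ne: "C \<noteq> {}" and sub: "C \<subseteq> unit_sphere"
    and D: "\<And>p. poly_fun_deg_le 11 p \<Longrightarrow> integral\<^sup>L sphere_measure p = (\<Sum>x\<in>C. p x) / real (card C)"
    using des unfolding spherical_design_def by auto
  have nx: "norm x = 1" using sub x by (auto simp: unit_sphere_def)
  have cpos: "real (card C) > 0" using fin ne by (simp add: card_gt_0_iff)
  have pf: "poly_fun_deg_le 11 (\<lambda>y. \<Sum>k<length cs. cs ! k * (x \<bullet> y) ^ k)"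
    by (rule pf_inner_poly) (use len in simp)
  have "(\<integral>y. (\<Sum>k<length cs. cs ! k * (x \<bullet> y) ^ k) \<partial>sphere_measure)
      = (\<Sum>k<length cs. (\<integral>y. cs ! k * (x \<bullet> y) ^ k \<partial>sphere_measure))"
    by (rule Bochner_Integration.integral_sum) (intro integrable_mult_right integrable_inner_pow)
  also have "\<dots> = (\<Sum>k<length cs. cs ! k * momv k)"
    by (simp add: sphere_moment[OF n nx])
  also have "\<dots> = pm cs 0" by (simp add: pm_sum)
  finally have "pm cs 0 = (\<Sum>y\<in>C. plh cs (x \<bullet> y)) / real (card C)"
    using D[OF pf] by (simp add: plh_sum)
  then show ?thesis using cpos by (simp add: field_simps)
qed

definition Zset :: "real set" where
  "Zset = {-1, 1/2, -1/2, 1/3, -1/3, 1/6, -1/6, 0}"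

lemma count_lemma:
  fixes C :: "(real^'n::finite) set"
  assumes n: "CARD('n) = 48" and des: "spherical_design 11 C" and x: "x \<in> C" and len: "length L \<le> 12"
    and Z: "\<forall>y\<in>C - {x}. x \<bullet> y \<in> Zset"
    and L1: "plh L t0 = 1" and L0: "\<forall>s\<in>Zset. s \<noteq> t0 \<longrightarrow> plh L s = 0"
    and xx: "x \<bullet> x = 1" and t0: "t0 \<noteq> 1"
  shows "real (dist_count C x t0) = real (card C) * pm L 0 - plh L 1"
proof -
  have fin: "finite C" using des unfolding spherical_design_def by auto
  have "real (card C) * pm L 0 = (\<Sum>y\<in>C. plh L (x \<bullet> y))"
    using design_sum[OF n des x len] by simp
  also have "\<dots> = plh L 1 + (\<Sum>y\<in>C - {x}. plh L (x \<bullet> y))"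
    using fin x xx by (simp add: sum.remove)
  also have "(\<Sum>y\<in>C - {x}. plh L (x \<bullet> y)) = (\<Sum>y\<in>C - {x}. (if x \<bullet> y = t0 then 1 else 0))"
  proof (rule sum.cong)
    fix y assume y: "y \<in> C - {x}"
    show "plh L (x \<bullet> y) = (if x \<bullet> y = t0 then 1 else 0)"
      using Z y L1 L0 by auto
  qed simp
  also have "\<dots> = real (card {y \<in> C - {x}. x \<bullet> y = t0})"
    using fin by (simp add: sum.If_cases Int_def conj_commute)
  also have "{y \<in> C - {x}. x \<bullet> y = t0} = {y \<in> C. x \<bullet> y = t0}"
    using xx t0 by auto
  finally show ?thesis unfolding dist_count_def by simp
qed

definition fprod :: "real \<Rightarrow> real" where
  "fprod t = (t+1)*t*t*((t-1/2)*(t-1/2)*(t+1/2)*(t+1/2))*((t-1/3)*(t+1/3)*(t-1/6)*(t+1/6))"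

lemma fprod_nonneg:
  assumes "-1 \<le> t" "\<not> (-1/3 < t \<and> t < -1/6)" "\<not> (1/6 < t \<and> t < 1/3)"
  shows "0 \<le> fprod t"
proof -
  have a: "0 \<le> t + 1" using assms by simp
  have b: "0 \<le> t * t" by simp
  have c: "0 \<le> (t-1/2)*(t-1/2)*(t+1/2)*(t+1/2)"
  proof -
    have eq: "(t-1/2)*(t-1/2)*(t+1/2)*(t+1/2) = ((t-1/2)*(t+1/2))*((t-1/2)*(t+1/2))" by (simp add: mult_ac)
    show ?thesis unfolding eq by (rule zero_le_square)
  qed
  have d: "0 \<le> (t-1/3)*(t+1/3)*(t-1/6)*(t+1/6)"
  proof -
    have eq: "(t-1/3)*(t+1/3)*(t-1/6)*(t+1/6) = ((t-1/3)*(t+1/3))*((t-1/6)*(t+1/6))" by (simp add: mult_ac)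
    have "t \<le> -1/3 \<or> (-1/6 \<le> t \<and> t \<le> 1/6) \<or> 1/3 \<le> t" using assms by linarith
    then show ?thesis
    proof (elim disjE conjE)
      assume "t \<le> -1/3"
      then have "0 \<le> (t-1/3)*(t+1/3)" "0 \<le> (t-1/6)*(t+1/6)" by (auto intro: mult_nonpos_nonpos)
      then show ?thesis unfolding eq by simp
    next
      assume h: "-1/6 \<le> t" "t \<le> 1/6"
      then have "(t-1/3)*(t+1/3) \<le> 0" "(t-1/6)*(t+1/6) \<le> 0" by (auto intro: mult_nonpos_nonneg)
      then show ?thesis unfolding eq by (simp add: mult_nonpos_nonpos)
    next
      assume "1/3 \<le> t"
      then have "0 \<le> (t-1/3)*(t+1/3)" "0 \<le> (t-1/6)*(t+1/6)" by auto
      then show ?thesis unfolding eq by simp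
    qed
  qed
  have abt: "0 \<le> (t+1)*t*t"
  proof -
    have "(t+1)*t*t = (t+1)*(t*t)" by (simp add: mult.assoc)
    then show ?thesis using mult_nonneg_nonneg[OF a b] by simp
  qed
  show ?thesis unfolding fprod_def by (rule mult_nonneg_nonneg[OF mult_nonneg_nonneg[OF abt c] d])
qed

lemma fprod_zero: "fprod t = 0 \<Longrightarrow> t \<in> Zset"
  by (auto simp: fprod_def Zset_def)

lemma plh_fcs: "plh fcs t = fprod t"
  unfolding fprod_def by (rule fcs_prod)

theorem theorem6:
  fixes C :: "(real ^ 'n) set"
  assumes "CARD('n) = 48"
    and "spherical_design 11 C"
    and "inner_products C \<subseteq> {-1..<1} - ({-1/3<..<-1/6} \<union> {1/6<..<1/3})"
  shows "card C \<ge> 52416000 \<and>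
    (card C = 52416000 \<longrightarrow>
      distance_invariant C \<and>
      (\<forall>x\<in>C. \<forall>t. -1 \<le> t \<and> t < 1 \<longrightarrow>
         dist_count C x t =
           (if t = -1 then 1
            else if t = 1/2 \<or> t = -1/2 then 36848
            else if t = 1/3 \<or> t = -1/3 then 1678887
            else if t = 1/6 \<or> t = -1/6 then 12608784
            else if t = 0 then 23766960
            else 0)))"
proof -
  note n = assms(1) and des = assms(2)
  have fin: "finite C" and ne: "C \<noteq> {}" and sub: "C \<subseteq> unit_sphere"
    using des unfolding spherical_design_def by auto
  have xx1: "x \<bullet> x = 1" if "x \<in> C" for x
    using sub that by (auto simp: unit_sphere_def dot_square_norm)
  have ip: "x \<bullet> y \<in> {-1..<1} - ({-1/3<..<-1/6} \<union> {1/6<..<1/3})" if "x \<in> C" "y \<in> C" "x \<noteq> y" for x y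
    using assms(3) that unfolding inner_products_def by blast
  have fnn: "0 \<le> plh fcs (x \<bullet> y)" if "x \<in> C" "y \<in> C - {x}" for x y
    unfolding plh_fcs using ip[of x y] that by (intro fprod_nonneg) auto
  have lf: "length fcs \<le> 12" by (simp add: fcs_def)
  have key: "real (card C) * (1/53913600) = 35/36 + (\<Sum>y\<in>C - {x}. plh fcs (x \<bullet> y))" if x: "x \<in> C" for x
  proof -
    have "real (card C) * (1/53913600) = (\<Sum>y\<in>C. plh fcs (x \<bullet> y))"
      using design_sum[OF n des x lf] by (simp add: fcs_vals)
    also have "\<dots> = plh fcs 1 + (\<Sum>y\<in>C - {x}. plh fcs (x \<bullet> y))"
      using fin x xx1[OF x] by (simp add: sum.remove)
    finally show ?thesis by (simp add: fcs_vals)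
  qed
  obtain x0 where x0: "x0 \<in> C" using ne by blast
  have "0 \<le> (\<Sum>y\<in>C - {x0}. plh fcs (x0 \<bullet> y))"
    by (rule sum_nonneg) (rule fnn[OF x0])
  then have "real (card C) \<ge> 52416000" using key[OF x0] by simp
  then have bound: "card C \<ge> 52416000" by simp
  moreover have "card C = 52416000 \<longrightarrow> distance_invariant C \<and>
      (\<forall>x\<in>C. \<forall>t. -1 \<le> t \<and> t < 1 \<longrightarrow>
         dist_count C x t =
           (if t = -1 then 1
            else if t = 1/2 \<or> t = -1/2 then 36848
            else if t = 1/3 \<or> t = -1/3 then 1678887
            else if t = 1/6 \<or> t = -1/6 then 12608784
            else if t = 0 then 23766960
            else 0))"
  proof
    assume N: "card C = 52416000"
    have cnt: "dist_count C x t =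
           (if t = -1 then 1
            else if t = 1/2 \<or> t = -1/2 then 36848
            else if t = 1/3 \<or> t = -1/3 then 1678887
            else if t = 1/6 \<or> t = -1/6 then 12608784
            else if t = 0 then 23766960
            else 0)" if x: "x \<in> C" and t: "-1 \<le> t" "t < 1" for x t
    proof -
      have xx: "x \<bullet> x = 1" by (rule xx1[OF x])
      have rc: "real (card C) = 52416000" using N by simp
      have "(\<Sum>y\<in>C - {x}. plh fcs (x \<bullet> y)) = 0" using key[OF x] N by simp
      then have "\<forall>y\<in>C - {x}. plh fcs (x \<bullet> y) = 0"
        using sum_nonneg_eq_0_iff[of "C - {x}" "\<lambda>y. plh fcs (x \<bullet> y)"] fin fnn[OF x] by auto
      then have Zx: "\<forall>y\<in>C - {x}. x \<bullet> y \<in> Zset"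
        by (auto simp: plh_fcs intro: fprod_zero)
      have c0: "dist_count C x (-1) = 1"
      proof -
        have "real (dist_count C x (-1)) = real (card C) * pm [0, 1/840, 0, -7/120, 0, 3/5, 0, -54/35] 0 - plh [0, 1/840, 0, -7/120, 0, 3/5, 0, -54/35] 1"
          by (rule count_lemma[OF n des x _ Zx _ _ xx]) (simp_all add: Zset_def)
        also have "\<dots> = 1" by (simp add: rc)
        finally show ?thesis by simp
      qed
      have c1: "dist_count C x (1/2) = 36848"
      proof -
        have "real (dist_count C x (1/2)) = real (card C) * pm [0, 1/15, 1/5, -43/15, -9, 78/5, 324/5, 216/5] 0 - plh [0, 1/15, 1/5, -43/15, -9, 78/5, 324/5, 216/5] 1"
          by (rule count_lemma[OF n des x _ Zx _ _ xx]) (simp_all add: Zset_def)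
        also have "\<dots> = 36848" by (simp add: rc)
        finally show ?thesis by simp
      qed
      have c2: "dist_count C x (-1/2) = 36848"
      proof -
        have "real (dist_count C x (-1/2)) = real (card C) * pm [0, -1/5, 1/5, 47/5, -9, -414/5, 324/5, 648/5] 0 - plh [0, -1/5, 1/5, 47/5, -9, -414/5, 324/5, 648/5] 1"
          by (rule count_lemma[OF n des x _ Zx _ _ xx]) (simp_all add: Zset_def)
        also have "\<dots> = 36848" by (simp add: rc)
        finally show ?thesis by simp
      qed
      have c3: "dist_count C x (1/3) = 1678887"
      proof -
        have "real (dist_count C x (1/3)) = real (card C) * pm [0, -27/40, -27/10, 999/40, 108, -81/5, -1944/5, -1458/5] 0 - plh [0, -27/40, -27/10, 999/40, 108, -81/5, -1944/5, -1458/5] 1"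
          by (rule count_lemma[OF n des x _ Zx _ _ xx]) (simp_all add: Zset_def)
        also have "\<dots> = 1678887" by (simp add: rc)
        finally show ?thesis by simp
      qed
      have c4: "dist_count C x (-1/3) = 1678887"
      proof -
        have "real (dist_count C x (-1/3)) = real (card C) * pm [0, 27/20, -27/10, -1161/20, 108, 1782/5, -1944/5, -2916/5] 0 - plh [0, 27/20, -27/10, -1161/20, 108, 1782/5, -1944/5, -2916/5] 1"
          by (rule count_lemma[OF n des x _ Zx _ _ xx]) (simp_all add: Zset_def)
        also have "\<dots> = 1678887" by (simp add: rc)
        finally show ?thesis by simp
      qed
      have c5: "dist_count C x (1/6) = 12608784"
      proof -
        have "real (dist_count C x (1/6)) = real (card C) * pm [0, 27/7, 27, -27, -351, -162, 972, 5832/7] 0 - plh [0, 27/7, 27, -27, -351, -162, 972, 5832/7] 1"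
          by (rule count_lemma[OF n des x _ Zx _ _ xx]) (simp_all add: Zset_def)
        also have "\<dots> = 12608784" by (simp add: rc)
        finally show ?thesis by simp
      qed
      have c6: "dist_count C x (-1/6) = 12608784"
      proof -
        have "real (dist_count C x (-1/6)) = real (card C) * pm [0, -27/5, 27, 513/5, -351, -3078/5, 972, 5832/5] 0 - plh [0, -27/5, 27, 513/5, -351, -3078/5, 972, 5832/5] 1"
          by (rule count_lemma[OF n des x _ Zx _ _ xx]) (simp_all add: Zset_def)
        also have "\<dots> = 12608784" by (simp add: rc)
        finally show ?thesis by simp
      qed
      have c7: "dist_count C x (0) = 23766960"
      proof -
        have "real (dist_count C x (0)) = real (card C) * pm [1, 1, -49, -49, 504, 504, -1296, -1296] 0 - plh [1, 1, -49, -49, 504, 504, -1296, -1296] 1"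
          by (rule count_lemma[OF n des x _ Zx _ _ xx]) (simp_all add: Zset_def)
        also have "\<dots> = 23766960" by (simp add: rc)
        finally show ?thesis by simp
      qed
      show ?thesis
      proof (cases "t \<in> Zset")
        case True
        then have "t = -1 \<or> t = 1/2 \<or> t = -1/2 \<or> t = 1/3 \<or> t = -1/3 \<or> t = 1/6 \<or> t = -1/6 \<or> t = 0"
          by (simp add: Zset_def)
        then show ?thesis by (elim disjE; hypsubst; simp only: c0 c1 c2 c3 c4 c5 c6 c7; simp)
      next
        case False
        have E: "{y \<in> C. x \<bullet> y = t} = {}"
        proof (rule ccontr)
          assume "{y \<in> C. x \<bullet> y = t} \<noteq> {}"
          then obtain y where y: "y \<in> C" "x \<bullet> y = t" by blast
          show False
          proof (cases "y = x")
            case True then show False using y xx t by simp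
          next
            case False then show False using Zx y \<open>t \<notin> Zset\<close> by auto
          qed
        qed
        have "dist_count C x t = 0" unfolding dist_count_def E by simp
        moreover have "t \<noteq> -1" "t \<noteq> 1/2" "t \<noteq> -1/2" "t \<noteq> 1/3" "t \<noteq> -1/3" "t \<noteq> 1/6" "t \<noteq> -1/6" "t \<noteq> 0"
          using False by (auto simp: Zset_def)
        ultimately show ?thesis by simp
      qed
    qed
    show "distance_invariant C \<and> (\<forall>x\<in>C. \<forall>t. -1 \<le> t \<and> t < 1 \<longrightarrow>
         dist_count C x t =
           (if t = -1 then 1
            else if t = 1/2 \<or> t = -1/2 then 36848
            else if t = 1/3 \<or> t = -1/3 then 1678887
            else if t = 1/6 \<or> t = -1/6 then 12608784
            else if t = 0 then 23766960
            else 0))"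
    proof
      show "distance_invariant C" unfolding distance_invariant_def
      proof (intro allI impI ballI)
        fix t :: real and x y assume t: "-1 \<le> t \<and> t < 1" and x: "x \<in> C" and y: "y \<in> C"
        show "dist_count C x t = dist_count C y t"
          using cnt[OF x conjunct1[OF t] conjunct2[OF t]] cnt[OF y conjunct1[OF t] conjunct2[OF t]] by (simp only:)
      qed
    next
      show "\<forall>x\<in>C. \<forall>t. -1 \<le> t \<and> t < 1 \<longrightarrow>
         dist_count C x t =
           (if t = -1 then 1
            else if t = 1/2 \<or> t = -1/2 then 36848
            else if t = 1/3 \<or> t = -1/3 then 1678887
            else if t = 1/6 \<or> t = -1/6 then 12608784
            else if t = 0 then 23766960
            else 0)"
      proof (intro ballI allI impI)
        fix x and t :: real assume x: "x \<in> C" and t: "-1 \<le> t \<and> t < 1"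
        show "dist_count C x t =
           (if t = -1 then 1
            else if t = 1/2 \<or> t = -1/2 then 36848
            else if t = 1/3 \<or> t = -1/3 then 1678887
            else if t = 1/6 \<or> t = -1/6 then 12608784
            else if t = 0 then 23766960
            else 0)"
          by (rule cnt[OF x conjunct1[OF t] conjunct2[OF t]])
      qed
    qed
  qed
  ultimately show ?thesis by (rule conjI)
qed

end
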